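(* Let $(X,*,0)$ be a KU-algebra, let $d: X \to X$ be a self map, let $\beta: X \to [0,1]$ be a fuzzy subset of $X$, and let $\mu_\beta: X \times X \to [0,1]$ be given by $\mu_\beta(x,y) = \min\{\beta(x), \beta(y)\}$. Then $\beta$ is a fuzzy left derivations KU-ideal of $X$ (with respect to $d$) if and only if $\mu_\beta$ is a fuzzy left derivations KU-ideal of the KU-algebra $X \times X$ (with respect to the self map $D(x,y) = (d(x), d(y))$).
   Context: A KU-algebra is a set $X$ with a binary operation $*$ and a constant $0$ such that for all $x,y,z \in X$: (KU1) $(x*y)*[(y*z)*(x*z)] = 0$; (KU2) $x*0 = 0$; (KU3) $0*x = x$; (KU4) $x*y = 0 = y*x$ implies $x = y$. The product $X \times X$ is a KU-algebra with operation $(x,y)*(u,v) = (x*u, y*v)$ and constant $(0,0)$. Given a KU-algebra $Y$ with constant $0_Y$ and a self map $D: Y \to Y$, a fuzzy set $\nu: Y \to [0,1]$ is a fuzzy left derivations KU-ideal of $Y$ if (F1) $\nu(0_Y) \ge \nu(a)$ for all $a \in Y$, and (FL2) $\nu(D(a*c)) \ge \min\{\nu(D(a)*(b*c)), \nu(D(b))\}$ for all $a,b,c \in Y$. The function $\mu_\beta$ is called the strongest fuzzy relation on $X$ associated with $\beta$; the paper writes $d(x,y)$ for the self map of $X\times X$ induced by $d$, i.e. $(d(x),d(y))$. *)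

theory Defs
  imports Complex_Main
begin

definition ku_algebra :: "('a \<Rightarrow> 'a \<Rightarrow> 'a) \<Rightarrow> 'a \<Rightarrow> bool" where
  "ku_algebra m z \<longleftrightarrow>
     (\<forall>x y w. m (m x y) (m (m y w) (m x w)) = z) \<and>
     (\<forall>x. m x z = z) \<and>
     (\<forall>x. m z x = x) \<and>
     (\<forall>x y. m x y = z \<and> m y x = z \<longrightarrow> x = y)"

definition prod_op :: "('a \<Rightarrow> 'a \<Rightarrow> 'a) \<Rightarrow> ('a \<times> 'a) \<Rightarrow> ('a \<times> 'a) \<Rightarrow> ('a \<times> 'a)" where
  "prod_op m p q = (m (fst p) (fst q), m (snd p) (snd q))"

definition fuzzy_set :: "('a \<Rightarrow> real) \<Rightarrow> bool" where
  "fuzzy_set \<nu> \<longleftrightarrow> (\<forall>x. 0 \<le> \<nu> x \<and> \<nu> x \<le> 1)"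

definition fuzzy_left_derivation_KU_ideal ::
  "('a \<Rightarrow> 'a \<Rightarrow> 'a) \<Rightarrow> 'a \<Rightarrow> ('a \<Rightarrow> 'a) \<Rightarrow> ('a \<Rightarrow> real) \<Rightarrow> bool" where
  "fuzzy_left_derivation_KU_ideal m z D \<nu> \<longleftrightarrow>
     fuzzy_set \<nu> \<and>
     (\<forall>a. \<nu> z \<ge> \<nu> a) \<and>
     (\<forall>a b c. \<nu> (D (m a c)) \<ge> min (\<nu> (m (D a) (m b c))) (\<nu> (D b)))"

end

theory Submission
  imports Defs
begin

theorem theorem5p14:
  fixes m :: "'a \<Rightarrow> 'a \<Rightarrow> 'a" and z :: 'a and d :: "'a \<Rightarrow> 'a" and \<beta> :: "'a \<Rightarrow> real"
  assumes "ku_algebra m z"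
    and "fuzzy_set \<beta>"
  shows "fuzzy_left_derivation_KU_ideal m z d \<beta> \<longleftrightarrow>
         fuzzy_left_derivation_KU_ideal (prod_op m) (z, z) (\<lambda>(x, y). (d x, d y))
           (\<lambda>(x, y). min (\<beta> x) (\<beta> y))"
proof
  assume H: "fuzzy_left_derivation_KU_ideal m z d \<beta>"
  hence F: "\<forall>a. \<beta> z \<ge> \<beta> a" "\<forall>a b c. \<beta> (d (m a c)) \<ge> min (\<beta> (m (d a) (m b c))) (\<beta> (d b))"
    by (auto simp: fuzzy_left_derivation_KU_ideal_def)
  show "fuzzy_left_derivation_KU_ideal (prod_op m) (z, z) (\<lambda>(x, y). (d x, d y))
           (\<lambda>(x, y). min (\<beta> x) (\<beta> y))"
    unfolding fuzzy_left_derivation_KU_ideal_def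
  proof (intro conjI allI)
    show "fuzzy_set (\<lambda>(x, y). min (\<beta> x) (\<beta> y))"
      using assms(2) by (auto simp: fuzzy_set_def min_def)
  next
    fix a :: "'a \<times> 'a" show "(case a of (x, y) \<Rightarrow> min (\<beta> x) (\<beta> y)) \<le> (case (z, z) of (x, y) \<Rightarrow> min (\<beta> x) (\<beta> y))"
      using F(1) by (cases a) (auto simp: min_def)
  next
    fix a b c :: "'a \<times> 'a"
    obtain a1 a2 b1 b2 c1 c2 where e: "a = (a1,a2)" "b = (b1,b2)" "c = (c1,c2)" by (cases a, cases b, cases c) auto
    have 1: "\<beta> (d (m a1 c1)) \<ge> min (\<beta> (m (d a1) (m b1 c1))) (\<beta> (d b1))" using F(2) by blast
    have 2: "\<beta> (d (m a2 c2)) \<ge> min (\<beta> (m (d a2) (m b2 c2))) (\<beta> (d b2))" using F(2) by blast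
    show "min ((\<lambda>(x, y). min (\<beta> x) (\<beta> y)) (prod_op m ((\<lambda>(x, y). (d x, d y)) a) (prod_op m b c))) ((\<lambda>(x, y). min (\<beta> x) (\<beta> y)) ((\<lambda>(x, y). (d x, d y)) b)) \<le> (\<lambda>(x, y). min (\<beta> x) (\<beta> y)) ((\<lambda>(x, y). (d x, d y)) (prod_op m a c))"
      using 1 2 by (simp add: e prod_op_def) (smt (verit) min_def)
  qed
next
  assume H: "fuzzy_left_derivation_KU_ideal (prod_op m) (z, z) (\<lambda>(x, y). (d x, d y))
           (\<lambda>(x, y). min (\<beta> x) (\<beta> y))"
  show "fuzzy_left_derivation_KU_ideal m z d \<beta>"
    unfolding fuzzy_left_derivation_KU_ideal_def
  proof (intro conjI allI)
    show "fuzzy_set \<beta>" by (rule assms(2))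
  next
    fix a show "\<beta> a \<le> \<beta> z"
      using H unfolding fuzzy_left_derivation_KU_ideal_def
      by (metis (no_types, lifting) case_prod_conv min.idem)
  next
    fix a b c
    have "min (case prod_op m ((\<lambda>(x, y). (d x, d y)) (a,a)) (prod_op m (b,b) (c,c)) of (x, y) \<Rightarrow> min (\<beta> x) (\<beta> y))
           ((\<lambda>(x, y). min (\<beta> x) (\<beta> y)) ((\<lambda>(x, y). (d x, d y)) (b,b)))
          \<le> (\<lambda>(x, y). min (\<beta> x) (\<beta> y)) ((\<lambda>(x, y). (d x, d y)) (prod_op m (a,a) (c,c)))"
      using H unfolding fuzzy_left_derivation_KU_ideal_def by blast
    thus "min (\<beta> (m (d a) (m b c))) (\<beta> (d b)) \<le> \<beta> (d (m a c))"
      by (simp add: prod_op_def)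
  qed
qed

end
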